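(* Let $n,p>1$ and $q\geq 1$ be integers. A magic column rectangle $MCR(n^{(p)};q)$ exists if and only if $n$ is even or all three of $n,p,q$ are odd.
   Context: A magic column rectangle $MCR(n^{(p)};q)$ is an $np\times q$ matrix whose entries are $1,2,\ldots,npq$, each appearing exactly once, which is partitioned into $pq$ blocks of size $n\times 1$ (each column is split into $p$ consecutive segments of $n$ entries) such that the sum of the entries in every block is the same constant (necessarily $\frac{n(npq+1)}{2}$). *)

theory Defs
  imports Main
begin

definition is_MCR :: "nat \<Rightarrow> nat \<Rightarrow> nat \<Rightarrow> (nat \<Rightarrow> nat \<Rightarrow> nat) \<Rightarrow> bool" where
  "is_MCR n p q M \<longleftrightarrow>
     bij_betw (\<lambda>(i, j). M i j) ({..<n * p} \<times> {..<q}) {1..n * p * q} \<and>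
     (\<exists>c. \<forall>k<p. \<forall>j<q. (\<Sum>i\<in>{k * n..<k * n + n}. M i j) = c)"

definition MCR_exists :: "nat \<Rightarrow> nat \<Rightarrow> nat \<Rightarrow> bool" where
  "MCR_exists n p q \<longleftrightarrow> (\<exists>M. is_MCR n p q M)"

end

theory Submission
  imports Defs
begin

definition part :: "nat \<Rightarrow> nat \<Rightarrow> (nat \<Rightarrow> nat \<Rightarrow> nat) \<Rightarrow> bool" where
  "part m n V \<longleftrightarrow> bij_betw (\<lambda>(b, r). V b r) ({..<m} \<times> {..<n}) {1..m * n} \<and>
     (\<exists>c. \<forall>b<m. (\<Sum>r<n. V b r) = c)"

lemma bij_by_inj_card:
  assumes "finite A" "finite B" "card A = card B" "inj_on f A" "f ` A \<subseteq> B"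
  shows "bij_betw f A B"
proof -
  have "card (f ` A) = card B" using assms card_image by metis
  then have "f ` A = B" using assms card_subset_eq by blast
  then show ?thesis using assms(4) by (simp add: bij_betw_def)
qed

lemma part2:
  assumes "m > 0"
  shows "part m 2 (\<lambda>b r. if r = 0 then b + 1 else 2 * m - b)"
  unfolding part_def
proof (intro conjI)
  show "bij_betw (\<lambda>(b, r::nat). if r = 0 then b + 1 else 2 * m - b) ({..<m} \<times> {..<2}) {1..m * 2}"
    apply (rule bij_by_inj_card)
        apply (auto simp: inj_on_def)
    done
  show "\<exists>c. \<forall>b<m. (\<Sum>r<2::nat. (if r = 0 then b + 1 else 2 * m - b)) = c"
    by (rule exI[of _ "2*m+1"]) (auto simp: numeral_2_eq_2)
qed

definition "g1 s b = (if b \<le> s then 3*s+2+b else s+1+(b::nat))"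
definition "g2 s b = (if b \<le> s then 6*s+3-2*b else 8*s+4-2*(b::nat))"
lemma g1r: "b < 2*s+1 \<Longrightarrow> 2*s+2 \<le> g1 s b \<and> g1 s b \<le> 4*s+2"
  unfolding g1_def by auto
lemma g2r: "b < 2*s+1 \<Longrightarrow> 4*s+3 \<le> g2 s b \<and> g2 s b \<le> 6*s+3"
  unfolding g2_def by auto
lemma g1i: "b < 2*s+1 \<Longrightarrow> b' < 2*s+1 \<Longrightarrow> g1 s b = g1 s b' \<Longrightarrow> b = b'"
  unfolding g1_def by (auto split: if_splits)
lemma g2i: "b < 2*s+1 \<Longrightarrow> b' < 2*s+1 \<Longrightarrow> g2 s b = g2 s b' \<Longrightarrow> b = b'"
proof -
  assume a: "b < 2*s+1" "b' < 2*s+1" "g2 s b = g2 s b'"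
  have o: "odd (g2 s x) \<longleftrightarrow> x \<le> s" if "x < 2*s+1" for x
    unfolding g2_def using that by presburger
  have "b \<le> s \<longleftrightarrow> b' \<le> s" using o[OF a(1)] o[OF a(2)] a(3) by simp
  then show ?thesis using a unfolding g2_def by (auto split: if_splits)
qed
lemma gsum: "b < 2*s+1 \<Longrightarrow> b + 1 + g1 s b + g2 s b = 9*s+6"
  unfolding g1_def g2_def by auto

lemma two_ne: "((2::nat) = 1) = False" "((2::nat) = 0) = False" "((1::nat) = 2) = False" "((0::nat) = 2) = False" by simp_all

lemma part3:
  "part (2*s+1) 3 (\<lambda>b r. if r = 0 then b+1 else if r = 1 then g1 s b else g2 s b)"
  unfolding part_def
proof (intro conjI)
  let ?V = "\<lambda>b r::nat. if r = 0 then b+1 else if r = 1 then g1 s b else g2 s b"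
  show "bij_betw (\<lambda>(b, r). ?V b r) ({..<2*s+1} \<times> {..<3}) {1..(2*s+1) * 3}"
  proof (rule bij_by_inj_card)
    show "inj_on (\<lambda>(b, r). ?V b r) ({..<2*s+1} \<times> {..<3})"
    proof -
     have *: "b = b' \<and> r = r'" if h: "b<2*s+1" "r<3" "b'<2*s+1" "r'<3" "?V b r = ?V b' r'" for b r b' r'
     proof -
      have r3: "r = 0 \<or> r = 1 \<or> r = 2" "r' = 0 \<or> r' = 1 \<or> r' = 2" using h(2,4) by auto
      note R = g1r[OF h(1)] g1r[OF h(3)] g2r[OF h(1)] g2r[OF h(3)]
      have E: "?V b r = ?V b' r'" by (rule h(5))
      have C00: "b = b' \<and> r = r'" if "r = 0" "r' = 0"
      proof -
        have "b+1 = b'+1" using E that by (simp only: if_True if_False that zero_neq_one one_neq_zero two_ne)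
        then have "b = b'" by simp
        then show ?thesis using that by simp
      qed
      have C01: "b = b' \<and> r = r'" if "r = 0" "r' = 1"
      proof -
        have "b+1 = g1 s b'" using E that by (simp only: if_True if_False that zero_neq_one one_neq_zero two_ne)
        then show ?thesis using R h(1,3) by linarith
      qed
      have C02: "b = b' \<and> r = r'" if "r = 0" "r' = 2"
      proof -
        have "b+1 = g2 s b'" using E that by (simp only: if_True if_False that zero_neq_one one_neq_zero two_ne)
        then show ?thesis using R h(1,3) by linarith
      qed
      have C10: "b = b' \<and> r = r'" if "r = 1" "r' = 0"
      proof -
        have "g1 s b = b'+1" using E that by (simp only: if_True if_False that zero_neq_one one_neq_zero two_ne)
        then show ?thesis using R h(1,3) by linarith
      qed
      have C11: "b = b' \<and> r = r'" if "r = 1" "r' = 1"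
      proof -
        have "g1 s b = g1 s b'" using E that by (simp only: if_True if_False that zero_neq_one one_neq_zero two_ne)
        then have "b = b'" using g1i[OF h(1,3)] by blast
        then show ?thesis using that by simp
      qed
      have C12: "b = b' \<and> r = r'" if "r = 1" "r' = 2"
      proof -
        have "g1 s b = g2 s b'" using E that by (simp only: if_True if_False that zero_neq_one one_neq_zero two_ne)
        then show ?thesis using R h(1,3) by linarith
      qed
      have C20: "b = b' \<and> r = r'" if "r = 2" "r' = 0"
      proof -
        have "g2 s b = b'+1" using E that by (simp only: if_True if_False that zero_neq_one one_neq_zero two_ne)
        then show ?thesis using R h(1,3) by linarith
      qed
      have C21: "b = b' \<and> r = r'" if "r = 2" "r' = 1"
      proof -
        have "g2 s b = g1 s b'" using E that by (simp only: if_True if_False that zero_neq_one one_neq_zero two_ne)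
        then show ?thesis using R h(1,3) by linarith
      qed
      have C22: "b = b' \<and> r = r'" if "r = 2" "r' = 2"
      proof -
        have "g2 s b = g2 s b'" using E that by (simp only: if_True if_False that zero_neq_one one_neq_zero two_ne)
        then have "b = b'" using g2i[OF h(1,3)] by blast
        then show ?thesis using that by simp
      qed
      show "b = b' \<and> r = r'" using r3 C00 C01 C02 C10 C11 C12 C20 C21 C22 by blast
     qed
     show ?thesis
     proof (rule inj_onI)
       fix x y assume xy: "x \<in> {..<2*s+1} \<times> {..<3}" "y \<in> {..<2*s+1} \<times> {..<3}"
         "(\<lambda>(b, r). ?V b r) x = (\<lambda>(b, r). ?V b r) y"
       obtain b r b' r' where "x = (b, r)" "y = (b', r')" by fastforce
       with xy have "b<2*s+1" "r<3" "b'<2*s+1" "r'<3" "?V b r = ?V b' r'" by simp_all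
       from *[OF this] show "x = y" using \<open>x = (b, r)\<close> \<open>y = (b', r')\<close> by simp
     qed
    qed
    show "(\<lambda>(b, r). ?V b r) ` ({..<2*s+1} \<times> {..<3}) \<subseteq> {1..(2*s+1) * 3}"
    proof (clarify)
      fix b r assume h: "b < 2*s+1" "r < (3::nat)"
      show "?V b r \<in> {1..(2*s+1) * 3}" using g1r[OF h(1)] g2r[OF h(1)] h by auto
    qed
  qed (simp_all add: card_cartesian_product)
  show "\<exists>c. \<forall>b<2*s+1. (\<Sum>r<3. ?V b r) = c"
  proof (intro exI allI impI)
    fix b assume "b < 2*s+1"
    then show "(\<Sum>r<3. ?V b r) = 9*s+6" using gsum[of b s] by (simp add: numeral_3_eq_3 add.assoc)
  qed
qed

lemma part_combine:
  assumes "part m n1 V1" "part m n2 V2"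
  shows "part m (n1+n2) (\<lambda>b r. if r < n1 then V1 b r else m*n1 + V2 b (r-n1))"
proof -
  from assms obtain c1 c2 where b1: "bij_betw (\<lambda>(b, r). V1 b r) ({..<m} \<times> {..<n1}) {1..m * n1}"
    and b2: "bij_betw (\<lambda>(b, r). V2 b r) ({..<m} \<times> {..<n2}) {1..m * n2}"
    and s1: "\<forall>b<m. (\<Sum>r<n1. V1 b r) = c1" and s2: "\<forall>b<m. (\<Sum>r<n2. V2 b r) = c2"
    unfolding part_def by blast
  have r1: "V1 b r \<in> {1..m*n1}" if "b<m" "r<n1" for b r
    using bij_betw_apply[OF b1, of "(b,r)"] that by auto
  have r2: "V2 b r \<in> {1..m*n2}" if "b<m" "r<n2" for b r
    using bij_betw_apply[OF b2, of "(b,r)"] that by auto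
  have i1: "V1 b r = V1 b' r' \<Longrightarrow> b<m \<Longrightarrow> r<n1 \<Longrightarrow> b'<m \<Longrightarrow> r'<n1 \<Longrightarrow> b=b' \<and> r=r'" for b r b' r'
    using b1 unfolding bij_betw_def inj_on_def by auto
  have i2: "V2 b r = V2 b' r' \<Longrightarrow> b<m \<Longrightarrow> r<n2 \<Longrightarrow> b'<m \<Longrightarrow> r'<n2 \<Longrightarrow> b=b' \<and> r=r'" for b r b' r'
    using b2 unfolding bij_betw_def inj_on_def by auto
  let ?V = "\<lambda>b r. if r < n1 then V1 b r else m*n1 + V2 b (r-n1)"
  have "bij_betw (\<lambda>(b, r). ?V b r) ({..<m} \<times> {..<n1+n2}) {1..m * (n1+n2)}"
  proof (rule bij_by_inj_card)
    show "inj_on (\<lambda>(b, r). ?V b r) ({..<m} \<times> {..<n1+n2})"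
    proof -
     have *: "b = b' \<and> r = r'" if h: "b<m" "r<n1+n2" "b'<m" "r'<n1+n2" "?V b r = ?V b' r'" for b r b' r'
      proof (cases "r < n1"; cases "r' < n1")
        assume a: "r<n1" "r'<n1"
        then have "V1 b r = V1 b' r'" using h(5) by (simp only: a if_True)
        then show ?thesis using i1 h(1,3) a by blast
      next
        assume a: "r<n1" "\<not> r'<n1"
        then have "V1 b r = m*n1 + V2 b' (r'-n1)" using h(5) by (simp only: a if_True if_False)
        moreover have "V1 b r \<le> m*n1" using r1[of b r] h(1) a by simp
        moreover have "V2 b' (r'-n1) \<ge> 1" using r2[of b' "r'-n1"] h(3,4) a by simp
        ultimately show ?thesis by linarith
      next
        assume a: "\<not> r<n1" "r'<n1"
        then have "V1 b' r' = m*n1 + V2 b (r-n1)" using h(5) by (simp only: a if_True if_False)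
        moreover have "V1 b' r' \<le> m*n1" using r1[of b' r'] h(3) a by simp
        moreover have "V2 b (r-n1) \<ge> 1" using r2[of b "r-n1"] h(1,2) a by simp
        ultimately show ?thesis by linarith
      next
        assume a: "\<not> r<n1" "\<not> r'<n1"
        then have "m*n1 + V2 b (r-n1) = m*n1 + V2 b' (r'-n1)" using h(5) by (simp only: a if_False)
        then have "V2 b (r-n1) = V2 b' (r'-n1)" by simp
        moreover have "r-n1 < n2" "r'-n1 < n2" using h(2,4) a by auto
        ultimately have "b = b' \<and> r-n1 = r'-n1" using i2 h(1,3) by blast
        then show ?thesis using a by auto
      qed
     show ?thesis
     proof (rule inj_onI)
       fix x y assume xy: "x \<in> {..<m} \<times> {..<n1+n2}" "y \<in> {..<m} \<times> {..<n1+n2}"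
         "(\<lambda>(b, r). ?V b r) x = (\<lambda>(b, r). ?V b r) y"
       obtain b r b' r' where "x = (b, r)" "y = (b', r')" by fastforce
       with xy have "b<m" "r<n1+n2" "b'<m" "r'<n1+n2" "?V b r = ?V b' r'" by simp_all
       from *[OF this] show "x = y" using \<open>x = (b, r)\<close> \<open>y = (b', r')\<close> by simp
     qed
    qed
    show "(\<lambda>(b, r). ?V b r) ` ({..<m} \<times> {..<n1+n2}) \<subseteq> {1..m * (n1+n2)}"
    proof
      fix x assume "x \<in> (\<lambda>(b, r). ?V b r) ` ({..<m} \<times> {..<n1+n2})"
      then obtain b r where h: "b<m" "r<n1+n2" and xe: "x = ?V b r" by auto
      have "1 \<le> ?V b r \<and> ?V b r \<le> m * (n1+n2)"
      proof (cases "r < n1")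
        case True
        then show ?thesis using r1[of b r] h by (simp add: algebra_simps)
      next
        case False
        then have "r - n1 < n2" using h by auto
        then have "V2 b (r-n1) \<le> m*n2" "V2 b (r-n1) \<ge> 1" using r2[of b "r-n1"] h by simp_all
        then show ?thesis using False by (simp add: algebra_simps)
      qed
      then show "x \<in> {1..m * (n1+n2)}" using xe by simp
    qed
  qed auto
  moreover have "\<forall>b<m. (\<Sum>r<n1+n2. ?V b r) = c1 + m*n1*n2 + c2"
  proof (intro allI impI)
    fix b assume "b<m"
    have u: "{..<n1+n2} = {..<n1} \<union> {n1..<n1+n2}" by auto
    have "(\<Sum>r<n1+n2. ?V b r) = (\<Sum>r\<in>{..<n1} \<union> {n1..<n1+n2}. ?V b r)"
      by (simp only: u)
    also have "\<dots> = (\<Sum>r<n1. ?V b r) + (\<Sum>r\<in>{n1..<n1+n2}. ?V b r)"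
      by (rule sum.union_disjoint) auto
    also have "(\<Sum>r<n1. ?V b r) = (\<Sum>r<n1. V1 b r)" by simp
    also have "(\<Sum>r\<in>{n1..<n1+n2}. ?V b r) = (\<Sum>r\<in>{0+n1..<n2+n1}. ?V b r)" by (simp add: add.commute)
    also have "\<dots> = (\<Sum>r\<in>{0..<n2}. ?V b (r+n1))" by (rule sum.shift_bounds_nat_ivl)
    also have "\<dots> = (\<Sum>r<n2. m*n1 + V2 b r)" by (simp add: lessThan_atLeast0)
    also have "\<dots> = m*n1*n2 + (\<Sum>r<n2. V2 b r)" by (simp add: sum.distrib)
    finally show "(\<Sum>r<n1+n2. ?V b r) = c1 + m*n1*n2 + c2" using s1 s2 \<open>b<m\<close> by simp
  qed
  ultimately show ?thesis unfolding part_def by blast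
qed

lemma part_even: "m > 0 \<Longrightarrow> \<exists>V. part m (2*(k+1)) V"
proof (induction k)
  case 0
  then show ?case using part2[of m] by auto
next
  case (Suc k)
  then obtain V where "part m (2*(k+1)) V" by blast
  from part_combine[OF this part2[OF Suc.prems]] have "\<exists>V. part m (2*(k+1)+2) V" by blast
  then show ?case by (simp add: algebra_simps)
qed

lemma part_odd:
  assumes "odd n" "n \<ge> 3" "odd m"
  shows "\<exists>V. part m n V"
proof -
  obtain s where ms: "m = 2*s+1" using assms(3) oddE by blast
  have p3: "\<exists>V. part m 3 V" using part3[of s] ms by blast
  show ?thesis
  proof (cases "n = 3")
    case True then show ?thesis using p3 by simp
  next
    case False
    then have "n \<ge> 5" using assms(1,2) by presburger
    then have "n = 3 + 2*((n-5) div 2+1)" using assms(1) by presburger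
    then obtain k where kn: "n = 3 + 2*(k+1)" by blast
    obtain V1 where v1: "part m 3 V1" using p3 by blast
    obtain V2 where v2: "part m (2*(k+1)) V2" using part_even[of m k] ms by auto
    show ?thesis using part_combine[OF v1 v2] kn by blast
  qed
qed

lemma aq_less: "a < (p::nat) \<Longrightarrow> j < q \<Longrightarrow> a*q + j < p*q"
proof -
  assume "a < p" "j < q"
  then have "a*q + j < a*q + q" by simp
  also have "\<dots> = Suc a * q" by simp
  also have "\<dots> \<le> p * q" using \<open>a < p\<close> by (intro mult_le_mono1) simp
  finally show ?thesis .
qed

lemma transfer:
  assumes "n > 0" "q > 0" "part (p*q) n V"
  shows "MCR_exists n p q"
proof -
  from assms(3) obtain c where bV: "bij_betw (\<lambda>(b, r). V b r) ({..<p*q} \<times> {..<n}) {1..p*q * n}"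
    and sV: "\<forall>b<p*q. (\<Sum>r<n. V b r) = c" unfolding part_def by blast
  define \<phi> where "\<phi> = (\<lambda>(i::nat, j::nat). ((i div n)*q + j, i mod n))"
  define M where "M = (\<lambda>i j. V ((i div n)*q + j) (i mod n))"
  have bphi: "bij_betw \<phi> ({..<n*p} \<times> {..<q}) ({..<p*q} \<times> {..<n})"
  proof (rule bij_by_inj_card)
    show "inj_on \<phi> ({..<n*p} \<times> {..<q})"
    proof (rule inj_onI)
      fix x y assume xy: "x \<in> {..<n*p} \<times> {..<q}" "y \<in> {..<n*p} \<times> {..<q}" "\<phi> x = \<phi> y"
      obtain i j i' j' where e: "x = (i, j)" "y = (i', j')" by fastforce
      with xy have h: "j < q" "j' < q" "(i div n)*q + j = (i' div n)*q + j'" "i mod n = i' mod n"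
        unfolding \<phi>_def by auto
      have "((i div n)*q + j) div q = i div n" "((i div n)*q + j) mod q = j"
        using h(1) assms(2) by simp_all
      moreover have "((i' div n)*q + j') div q = i' div n" "((i' div n)*q + j') mod q = j'"
        using h(2) assms(2) by simp_all
      ultimately have "i div n = i' div n" "j = j'" using h(3) by metis+
      then have "i = i'" using h(4) by (metis div_mult_mod_eq)
      then show "x = y" using e \<open>j = j'\<close> by simp
    qed
    show "\<phi> ` ({..<n*p} \<times> {..<q}) \<subseteq> {..<p*q} \<times> {..<n}"
    proof
      fix x assume "x \<in> \<phi> ` ({..<n*p} \<times> {..<q})"
      then obtain i j where h: "i < n*p" "j < q" "x = \<phi> (i, j)" by auto
      have "i div n < p" using h(1) by (simp add: less_mult_imp_div_less mult.commute)
      then have "(i div n)*q + j < p*q" using aq_less h(2) by blast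
      moreover have "i mod n < n" using assms(1) by simp
      ultimately show "x \<in> {..<p*q} \<times> {..<n}" using h(3) unfolding \<phi>_def by simp
    qed
  qed (simp_all add: card_cartesian_product)
  have fe: "(\<lambda>(i, j). M i j) = (\<lambda>(b, r). V b r) \<circ> \<phi>"
    unfolding M_def \<phi>_def by (auto simp: fun_eq_iff)
  have "bij_betw (\<lambda>(i, j). M i j) ({..<n*p} \<times> {..<q}) {1..n*p*q}"
    unfolding fe using bij_betw_trans[OF bphi bV] by (simp add: mult.commute mult.left_commute)
  moreover have "\<forall>k<p. \<forall>j<q. (\<Sum>i\<in>{k * n..<k * n + n}. M i j) = c"
  proof (intro allI impI)
    fix k j assume kj: "k < p" "j < q"
    have "(\<Sum>i\<in>{k * n..<k * n + n}. M i j) = (\<Sum>i\<in>{0 + k * n..<n + k * n}. M i j)"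
      by (simp add: add.commute)
    also have "\<dots> = (\<Sum>r\<in>{0..<n}. M (r + k*n) j)" by (rule sum.shift_bounds_nat_ivl)
    also have "\<dots> = (\<Sum>r\<in>{0..<n}. V (k*q + j) r)"
      unfolding M_def using assms(1) by (intro sum.cong) auto
    also have "\<dots> = c" using sV aq_less[OF kj] by (simp add: lessThan_atLeast0)
    finally show "(\<Sum>i\<in>{k * n..<k * n + n}. M i j) = c" .
  qed
  ultimately show ?thesis unfolding MCR_exists_def is_MCR_def by blast
qed

lemma blocks_sum0:
  fixes f :: "nat \<Rightarrow> nat" and n p :: nat
  shows "(\<Sum>i\<in>{0..<n*p}. f i) = (\<Sum>k<p. \<Sum>i\<in>{k*n..<k*n+n}. f i)"
proof (induction p)
  case 0 then show ?case by simp
next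
  case (Suc p)
  have "(\<Sum>i\<in>{0..<n*Suc p}. f i) = (\<Sum>i\<in>{0..<n*p}. f i) + (\<Sum>i\<in>{n*p..<n*Suc p}. f i)"
    by (rule sum.atLeastLessThan_concat[symmetric]) auto
  then show ?case using Suc.IH by (simp add: mult.commute add.commute)
qed

lemma blocks_sum:
  fixes f :: "nat \<Rightarrow> nat" and n p :: nat
  shows "(\<Sum>i<n*p. f i) = (\<Sum>k<p. \<Sum>i\<in>{k*n..<k*n+n}. f i)"
  using blocks_sum0[of f n p] by (simp add: lessThan_atLeast0)

lemma necessity:
  assumes "n > 1" "p > 1" "q \<ge> 1" "MCR_exists n p q" "odd n"
  shows "odd p \<and> odd q"
proof -
  from assms(4) obtain M c where bM: "bij_betw (\<lambda>(i, j). M i j) ({..<n * p} \<times> {..<q}) {1..n * p * q}"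
    and sM: "\<forall>k<p. \<forall>j<q. (\<Sum>i\<in>{k * n..<k * n + n}. M i j) = c"
    unfolding MCR_exists_def is_MCR_def by blast
  define N where "N = n*p*q"
  have "(\<Sum>x\<in>{..<n * p} \<times> {..<q}. (\<lambda>(i, j). M i j) x) = (\<Sum>x\<in>{1..N}. x)"
    unfolding N_def by (rule sum.reindex_bij_betw[OF bM])
  moreover have "(\<Sum>x\<in>{..<n * p} \<times> {..<q}. (\<lambda>(i, j). M i j) x) = (\<Sum>i<n*p. \<Sum>j<q. M i j)"
    by (simp add: sum.cartesian_product)
  moreover have "(\<Sum>i<n*p. \<Sum>j<q. M i j) = (\<Sum>j<q. \<Sum>i<n*p. M i j)" by (rule sum.swap)
  moreover have "(\<Sum>j<q. \<Sum>i<n*p. M i j) = (\<Sum>j<q. \<Sum>k<p. \<Sum>i\<in>{k*n..<k*n+n}. M i j)"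
    by (simp only: blocks_sum)
  moreover have "\<dots> = (\<Sum>j<q. \<Sum>k<p. c)" using sM by simp
  moreover have "\<dots> = p*q*c" by simp
  ultimately have tot: "p*q*c = (\<Sum>x\<in>{1..N}. x)" by simp
  have "2 * (\<Sum>x\<in>{1..N}. x) = N*(N+1)"
    using double_gauss_sum_from_Suc_0[of N, where ?'a = nat] by simp
  then have "p*q*(2*c) = p*q*(n*(N+1))" using tot unfolding N_def by (simp add: algebra_simps)
  then have e: "2*c = n*(N+1)" using assms(2,3) by simp
  show ?thesis
  proof (rule ccontr)
    assume "\<not> (odd p \<and> odd q)"
    then have "even N" unfolding N_def by auto
    then have "odd (n*(N+1))" using assms(5) by simp
    then show False using e by (metis dvd_triv_left)
  qed
qed

lemma part_even': "m > 0 \<Longrightarrow> even n \<Longrightarrow> n > 1 \<Longrightarrow> \<exists>V. part m n V"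
proof -
  assume "m > 0" "even n" "n > 1"
  then have "n = 2*((n div 2 - 1)+1)" by presburger
  then obtain k where "n = 2*(k+1)" by blast
  then show ?thesis using part_even \<open>m > 0\<close> by blast
qed

theorem theorem9:
  fixes n p q :: nat
  assumes "n > 1" and "p > 1" and "q \<ge> 1"
  shows "MCR_exists n p q \<longleftrightarrow> (even n \<or> (odd n \<and> odd p \<and> odd q))"
proof
  assume "MCR_exists n p q"
  then show "even n \<or> (odd n \<and> odd p \<and> odd q)" using necessity[OF assms] by blast
next
  assume h: "even n \<or> (odd n \<and> odd p \<and> odd q)"
  have pq: "p*q > 0" using assms by simp
  have "\<exists>V. part (p*q) n V"
  proof (cases "even n")
    case True then show ?thesis using part_even' pq assms(1) by blast
  next
    case False
    then have "odd p" "odd q" using h by simp_all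
    have "n \<ge> 3" using False assms(1) by presburger
    have "odd (p*q)" using \<open>odd p\<close> \<open>odd q\<close> by simp
    then show ?thesis using part_odd[of n "p*q"] False \<open>n \<ge> 3\<close> by blast
  qed
  then obtain V where "part (p*q) n V" by blast
  moreover have "n > 0" "q > 0" using assms by simp_all
  ultimately show "MCR_exists n p q" using transfer by blast
qed

end
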